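(* Let $G$ be a finite simple graph containing a leaf (a vertex of degree one), and let $I=I(G)\subset R=K[V(G)]$ be its edge ideal. Then $\operatorname{Ass}(R/I^t)\subset\operatorname{Ass}(R/I^{t+1})$ for all $t\ge1$; that is, the sets of associated primes of the powers of $I$ form an ascending chain.
   Context: $R=K[x_1,\dots,x_n]$ with $K$ a field and the vertices of $G$ identified with the variables; $I(G)$ is generated by the monomials $x_ix_j$ with $\{x_i,x_j\}$ an edge of $G$. $\operatorname{Ass}(M)$ denotes the set of associated primes of an $R$-module $M$. *)

theory Defs
  imports "HOL-Library.Poly_Mapping"
begin

definition is_ideal :: "'a::comm_ring_1 set \<Rightarrow> bool" where
  "is_ideal J \<longleftrightarrow> 0 \<in> J \<and> (\<forall>a\<in>J. \<forall>b\<in>J. a + b \<in> J) \<and> (\<forall>r. \<forall>a\<in>J. r * a \<in> J)"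

definition ideal_gen :: "'a::comm_ring_1 set \<Rightarrow> 'a set" where
  "ideal_gen S = \<Inter>{J. is_ideal J \<and> S \<subseteq> J}"

definition is_prime_ideal :: "'a::comm_ring_1 set \<Rightarrow> bool" where
  "is_prime_ideal P \<longleftrightarrow> is_ideal P \<and> P \<noteq> UNIV \<and> (\<forall>a b. a * b \<in> P \<longrightarrow> a \<in> P \<or> b \<in> P)"

definition ideal_pow :: "'a::comm_ring_1 set \<Rightarrow> nat \<Rightarrow> 'a set" where
  "ideal_pow I t = ideal_gen {prod_list xs | xs. length xs = t \<and> set xs \<subseteq> I}"

text \<open>Associated primes of the module R/J: primes that are the annihilator of
  some element f + J of R/J, i.e. of the form (J : f).\<close>
definition Ass_quot :: "'a::comm_ring_1 set \<Rightarrow> 'a set set" where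
  "Ass_quot J = {P. is_prime_ideal P \<and> (\<exists>f. P = {g. g * f \<in> J})}"

text \<open>Polynomial ring K[x_v : v \<in> V] as finitely supported functions from monomials
  (finitely supported exponent vectors) to coefficients.\<close>
type_synonym ('v, 'k) mpoly = "('v \<Rightarrow>\<^sub>0 nat) \<Rightarrow>\<^sub>0 'k"

definition var :: "'v \<Rightarrow> ('v, 'k::field) mpoly" where
  "var v = Poly_Mapping.single (Poly_Mapping.single v 1) 1"

definition simple_graph :: "'v set set \<Rightarrow> bool" where
  "simple_graph E \<longleftrightarrow> (\<forall>e\<in>E. card e = 2)"

definition degree :: "'v set set \<Rightarrow> 'v \<Rightarrow> nat" where
  "degree E v = card {u. {u, v} \<in> E}"

definition has_leaf :: "'v set set \<Rightarrow> bool" where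
  "has_leaf E \<longleftrightarrow> (\<exists>v. degree E v = 1)"

definition edge_ideal :: "'v set set \<Rightarrow> ('v, 'k::field) mpoly set" where
  "edge_ideal E = ideal_gen {var u * var v | u v. {u, v} \<in> E}"

end

theory Submission
  imports Defs
begin

lemma ideal_gen_ideal: "is_ideal (ideal_gen S)"
  unfolding ideal_gen_def is_ideal_def by auto

lemma ideal_gen_sub: "S \<subseteq> ideal_gen S"
  unfolding ideal_gen_def by auto

lemma ideal_gen_least: "is_ideal J \<Longrightarrow> S \<subseteq> J \<Longrightarrow> ideal_gen S \<subseteq> J"
  unfolding ideal_gen_def by auto

lemma ideal_sum:
  assumes "is_ideal J" "finite A" "\<And>x. x \<in> A \<Longrightarrow> f x \<in> J" shows "sum f A \<in> J"
  using assms(2,3) by (induction A rule: finite_induct) (use assms(1) in \<open>auto simp: is_ideal_def\<close>)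

lemma ideal_mult: "is_ideal J \<Longrightarrow> a \<in> J \<Longrightarrow> r * a \<in> J"
  unfolding is_ideal_def by blast

lemma ideal_add: "is_ideal J \<Longrightarrow> a \<in> J \<Longrightarrow> b \<in> J \<Longrightarrow> a + b \<in> J"
  unfolding is_ideal_def by blast

definition mle :: "('v \<Rightarrow>\<^sub>0 nat) \<Rightarrow> ('v \<Rightarrow>\<^sub>0 nat) \<Rightarrow> bool" where
  "mle s m \<longleftrightarrow> (\<forall>v. Poly_Mapping.lookup s v \<le> Poly_Mapping.lookup m v)"

definition MI :: "('v \<Rightarrow>\<^sub>0 nat) set \<Rightarrow> ('v, 'k::field) mpoly set" where
  "MI S = {p. \<forall>m\<in>Poly_Mapping.keys p. \<exists>s\<in>S. mle s m}"

definition Mon :: "('v \<Rightarrow>\<^sub>0 nat) set \<Rightarrow> ('v, 'k::field) mpoly set" where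
  "Mon S = {Poly_Mapping.single s 1 | s. s \<in> S}"

lemma MI_ideal: "is_ideal (MI S)"
  unfolding is_ideal_def MI_def
proof (intro conjI ballI allI)
  show "0 \<in> {p. \<forall>m\<in>Poly_Mapping.keys p. \<exists>s\<in>S. mle s m}" by simp
next
  fix a b :: "('a, 'b) mpoly"
  assume a: "a \<in> {p. \<forall>m\<in>Poly_Mapping.keys p. \<exists>s\<in>S. mle s m}" and b: "b \<in> {p. \<forall>m\<in>Poly_Mapping.keys p. \<exists>s\<in>S. mle s m}"
  show "a + b \<in> {p. \<forall>m\<in>Poly_Mapping.keys p. \<exists>s\<in>S. mle s m}"
  proof (safe)
    fix m assume "m \<in> Poly_Mapping.keys (a + b)"
    then have "m \<in> Poly_Mapping.keys a \<or> m \<in> Poly_Mapping.keys b" using keys_add[of a b] by blast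
    then show "\<exists>s\<in>S. mle s m" using a b by blast
  qed
next
  fix r a :: "('a, 'b) mpoly"
  assume a: "a \<in> {p. \<forall>m\<in>Poly_Mapping.keys p. \<exists>s\<in>S. mle s m}"
  show "r * a \<in> {p. \<forall>m\<in>Poly_Mapping.keys p. \<exists>s\<in>S. mle s m}"
  proof (safe)
    fix m assume "m \<in> Poly_Mapping.keys (r * a)"
    then obtain x y where "m = x + y" "y \<in> Poly_Mapping.keys a" using keys_mult[of r a] by blast
    then obtain s where "s \<in> S" "mle s y" using a by blast
    then have "mle s m" using \<open>m = x + y\<close> using \<open>mle s y\<close> by (simp add: mle_def lookup_add trans_le_add2)
    then show "\<exists>s\<in>S. mle s m" using \<open>s \<in> S\<close> by blast
  qed
qed

lemma poly_decomp: "(p :: ('a \<Rightarrow>\<^sub>0 'b::comm_monoid_add)) = (\<Sum>k\<in>Poly_Mapping.keys p. Poly_Mapping.single k (Poly_Mapping.lookup p k))"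
proof (rule poly_mapping_eqI)
  fix x
  show "Poly_Mapping.lookup p x = Poly_Mapping.lookup (\<Sum>k\<in>Poly_Mapping.keys p. Poly_Mapping.single k (Poly_Mapping.lookup p k)) x"
    unfolding lookup_sum lookup_single by (simp add: when_def in_keys_iff)
qed

lemma Mon_sub_MI: "Mon S \<subseteq> MI S"
  unfolding Mon_def MI_def mle_def by auto

lemma MI_sub_gen: "MI S \<subseteq> ideal_gen (Mon S)"
proof
  fix p :: "('a,'b) mpoly" assume p: "p \<in> MI S"
  have "(\<Sum>k\<in>Poly_Mapping.keys p. Poly_Mapping.single k (Poly_Mapping.lookup p k)) \<in> ideal_gen (Mon S)"
  proof (rule ideal_sum[OF ideal_gen_ideal finite_keys])
    fix k assume k: "k \<in> Poly_Mapping.keys p"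
    then obtain s where s: "s \<in> S" "mle s k" using p unfolding MI_def by blast
    have ks: "(k - s) + s = k"
      by (rule poly_mapping_eqI) (use s(2) in \<open>auto simp: lookup_add lookup_minus mle_def\<close>)
    have eq: "Poly_Mapping.single k (Poly_Mapping.lookup p k) = Poly_Mapping.single (k - s) (Poly_Mapping.lookup p k) * Poly_Mapping.single s 1"
      by (simp add: mult_single ks)
    have "Poly_Mapping.single s 1 \<in> Mon S"
      using s unfolding Mon_def by blast
    then have "Poly_Mapping.single s 1 \<in> ideal_gen (Mon S)"
      using ideal_gen_sub by blast
    then show "Poly_Mapping.single k (Poly_Mapping.lookup p k) \<in> ideal_gen (Mon S)"
      unfolding eq by (rule ideal_mult[OF ideal_gen_ideal])
  qed
  then show "p \<in> ideal_gen (Mon S)" using poly_decomp[of p] by metis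
qed

lemma MI_gen: "ideal_gen (Mon S) = MI S"
  using MI_sub_gen ideal_gen_least[OF MI_ideal Mon_sub_MI] by blast

definition ev :: "'v \<Rightarrow> 'v \<Rightarrow> ('v \<Rightarrow>\<^sub>0 nat)" where
  "ev u v = Poly_Mapping.single u 1 + Poly_Mapping.single v 1"

definition S1 :: "'v set set \<Rightarrow> ('v \<Rightarrow>\<^sub>0 nat) set" where
  "S1 E = {ev u v | u v. {u, v} \<in> E}"

definition St :: "'v set set \<Rightarrow> nat \<Rightarrow> ('v \<Rightarrow>\<^sub>0 nat) set" where
  "St E t = {sum_list ds | ds. length ds = t \<and> set ds \<subseteq> S1 E}"

lemma var_mult: "(var u * var v :: ('v,'k::field) mpoly) = Poly_Mapping.single (ev u v) 1"
  unfolding var_def ev_def by (simp add: mult_single)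

lemma edge_MI: "(edge_ideal E :: ('v,'k::field) mpoly set) = MI (S1 E)"
proof -
  have "{var u * var v | u v. {u, v} \<in> E} = (Mon (S1 E) :: ('v,'k) mpoly set)"
    unfolding Mon_def S1_def var_mult by blast
  then show ?thesis unfolding edge_ideal_def using MI_gen[of "S1 E"] by metis
qed

lemma prod_in:
  assumes "set xs \<subseteq> (MI (S1 E) :: ('v,'k::field) mpoly set)"
  shows "prod_list xs \<in> MI (St E (length xs))"
  using assms
proof (induction xs)
  case Nil
  have "(0::'v \<Rightarrow>\<^sub>0 nat) \<in> St E 0" unfolding St_def by force
  then show ?case unfolding MI_def mle_def by (auto intro!: bexI[of _ 0])
next
  case (Cons x xs)
  then have x: "x \<in> MI (S1 E)" and IH: "prod_list xs \<in> MI (St E (length xs))" by auto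
  show ?case
  proof (simp add: MI_def, safe)
    fix m assume "m \<in> Poly_Mapping.keys (x * prod_list xs)"
    then obtain a b where ab: "m = a + b" "a \<in> Poly_Mapping.keys x" "b \<in> Poly_Mapping.keys (prod_list xs)"
      using keys_mult[of x "prod_list xs"] by blast
    obtain s1 where s1: "s1 \<in> S1 E" "mle s1 a" using x ab(2) unfolding MI_def by blast
    obtain s where s: "s \<in> St E (length xs)" "mle s b" using IH ab(3) unfolding MI_def by blast
    then obtain ds where ds: "s = sum_list ds" "length ds = length xs" "set ds \<subseteq> S1 E"
      unfolding St_def by blast
    have "s1 + s \<in> St E (Suc (length xs))"
      unfolding St_def using ds s1(1) by (auto intro!: exI[of _ "s1 # ds"])
    moreover have "mle (s1 + s) m" using s1(2) s(2) ab(1) by (simp add: mle_def lookup_add add_mono)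
    ultimately show "\<exists>s\<in>St E (Suc (length xs)). mle s m" by blast
  qed
qed

lemma mon_prod: "(Poly_Mapping.single (sum_list ds) 1 :: ('v,'k::field) mpoly) = prod_list (map (\<lambda>d. Poly_Mapping.single d 1) ds)"
proof (induction ds)
  case (Cons a ds)
  have "(\<Prod>d\<leftarrow>a # ds. Poly_Mapping.single d 1 :: ('v,'k) mpoly) = Poly_Mapping.single a 1 * Poly_Mapping.single (sum_list ds) 1"
    using Cons.IH by simp
  also have "\<dots> = Poly_Mapping.single (sum_list (a # ds)) 1" by (simp add: mult_single)
  finally show ?case by simp
qed simp

lemma pow_MI: "ideal_pow (MI (S1 E) :: ('v,'k::field) mpoly set) t = MI (St E t)"
proof
  show "ideal_pow (MI (S1 E) :: ('v,'k::field) mpoly set) t \<subseteq> MI (St E t)"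
    unfolding ideal_pow_def
    by (rule ideal_gen_least[OF MI_ideal]) (use prod_in in blast)
next
  have "(Mon (St E t) :: ('v,'k) mpoly set) \<subseteq> {prod_list xs | xs. length xs = t \<and> set xs \<subseteq> MI (S1 E)}"
  proof
    fix p :: "('v,'k) mpoly" assume "p \<in> Mon (St E t)"
    then obtain ds where ds: "p = Poly_Mapping.single (sum_list ds) 1" "length ds = t" "set ds \<subseteq> S1 E"
      unfolding Mon_def St_def by blast
    have "set (map (\<lambda>d. Poly_Mapping.single d 1) ds) \<subseteq> (MI (S1 E) :: ('v,'k) mpoly set)"
      using ds(3) Mon_sub_MI unfolding Mon_def by fastforce
    then show "p \<in> {prod_list xs | xs. length xs = t \<and> set xs \<subseteq> MI (S1 E)}"
      using ds(1,2) mon_prod[of ds] by (intro CollectI exI[of _ "map (\<lambda>d. Poly_Mapping.single d 1) ds"]) simp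
  qed
  then have "ideal_gen (Mon (St E t)) \<subseteq> ideal_pow (MI (S1 E) :: ('v,'k::field) mpoly set) t"
    unfolding ideal_pow_def by (intro ideal_gen_least[OF ideal_gen_ideal]) (use ideal_gen_sub in blast)
  then show "MI (St E t) \<subseteq> ideal_pow (MI (S1 E) :: ('v,'k::field) mpoly set) t" unfolding MI_gen .
qed

lemma lookup_sum_list: "Poly_Mapping.lookup (sum_list xs) w = sum_list (map (\<lambda>x. Poly_Mapping.lookup x w) xs)"
  by (induction xs) (simp_all add: lookup_add)

lemma sum_list_remove1: "x \<in> set xs \<Longrightarrow> sum_list xs = x + sum_list (remove1 x (xs :: 'a::comm_monoid_add list))"
  by (induction xs) (auto simp: ac_simps)

lemma lookup_ev: "Poly_Mapping.lookup (ev a b) w = (if w = a then 1 else 0) + (if w = b then 1 else 0)"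
  unfolding ev_def by (simp add: lookup_add lookup_single when_def)

locale leafctx =
  fixes E :: "'v set set" and a b :: 'v
  assumes sg: "simple_graph E" and ab: "{b, a} \<in> E" and uniq: "\<And>w. {w, a} \<in> E \<Longrightarrow> w = b"
begin

lemma a_ne_b: "a \<noteq> b"
  using sg ab unfolding simple_graph_def by fastforce

lemma e_in: "ev a b \<in> S1 E"
  unfolding S1_def using ab by (auto simp: insert_commute)

lemma S1_a: assumes "d \<in> S1 E" "Poly_Mapping.lookup d a \<noteq> 0" shows "d = ev a b"
proof -
  obtain u v where d: "d = ev u v" "{u, v} \<in> E" using assms(1) unfolding S1_def by blast
  then have "u = a \<or> v = a" using assms(2) by (auto simp: lookup_ev split: if_splits)
  then show ?thesis
  proof
    assume "u = a" then have "{v, a} \<in> E" using d(2) by (simp add: insert_commute)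
    then have "v = b" by (rule uniq)
    then show ?thesis using d \<open>u = a\<close> by simp
  next
    assume "v = a" then have "{u, a} \<in> E" using d(2) by simp
    then have "u = b" by (rule uniq)
    then show ?thesis using d \<open>v = a\<close> by (simp add: ev_def add.commute)
  qed
qed

lemma S1_le1: assumes "d \<in> S1 E" shows "Poly_Mapping.lookup d w \<le> 1"
proof -
  obtain u v where d: "d = ev u v" "{u, v} \<in> E" using assms(1) unfolding S1_def by blast
  then have "u \<noteq> v" using sg unfolding simple_graph_def by fastforce
  then show ?thesis using d by (auto simp: lookup_ev)
qed

lemma comb:
  assumes len: "length ds = Suc t" and sub: "set ds \<subseteq> S1 E"
    and le: "mle (sum_list ds) (m + ev a b)"
  shows "\<exists>s\<in>St E t. mle s m"
proof (cases "ev a b \<in> set ds")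
  case True
  define r where "r = remove1 (ev a b) ds"
  have r: "length r = t" "set r \<subseteq> S1 E" unfolding r_def using len sub True
    by (auto simp: length_remove1 dest: set_remove1_subset[THEN subsetD])
  have eq: "sum_list ds = ev a b + sum_list r" unfolding r_def by (rule sum_list_remove1[OF True])
  have "mle (sum_list r) m" using le unfolding mle_def eq lookup_add by (metis add.commute add_le_cancel_left)
  moreover have "sum_list r \<in> St E t" unfolding St_def using r by blast
  ultimately show ?thesis by blast
next
  case False
  have A: "\<forall>d\<in>set ds. Poly_Mapping.lookup d a = 0" using False sub S1_a by blast
  have sa: "Poly_Mapping.lookup (sum_list ds) a = 0" using A by (simp add: lookup_sum_list)
  have ne: "ds \<noteq> []" using len by auto
  obtain d where d: "d \<in> set ds" "(\<exists>d'\<in>set ds. Poly_Mapping.lookup d' b \<noteq> 0) \<longrightarrow> Poly_Mapping.lookup d b \<noteq> 0"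
    using ne by (metis list.set_sel(1))
  define r where "r = remove1 d ds"
  have r: "length r = t" "set r \<subseteq> S1 E" unfolding r_def using len sub d(1)
    by (auto simp: length_remove1 dest: set_remove1_subset[THEN subsetD])
  have eq: "sum_list ds = d + sum_list r" unfolding r_def by (rule sum_list_remove1[OF d(1)])
  have "mle (sum_list r) m" unfolding mle_def
  proof
    fix w
    have lw: "Poly_Mapping.lookup d w + Poly_Mapping.lookup (sum_list r) w \<le> Poly_Mapping.lookup m w + Poly_Mapping.lookup (ev a b) w"
      using le unfolding mle_def eq lookup_add by blast
    show "Poly_Mapping.lookup (sum_list r) w \<le> Poly_Mapping.lookup m w"
    proof (cases "w = a")
      case True then show ?thesis using sa unfolding eq lookup_add by simp
    next
      case wa: False
      show ?thesis
      proof (cases "w = b")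
        case True
        show ?thesis
        proof (cases "\<exists>d'\<in>set ds. Poly_Mapping.lookup d' b \<noteq> 0")
          case True
          then have "Poly_Mapping.lookup d b \<ge> 1" using d(2) by simp
          then show ?thesis using lw \<open>w = b\<close> a_ne_b by (simp add: lookup_ev)
        next
          case False
          then have "Poly_Mapping.lookup (sum_list ds) b = 0" by (simp add: lookup_sum_list)
          then show ?thesis using \<open>w = b\<close> unfolding eq lookup_add by simp
        qed
      next
        case False
        then show ?thesis using lw wa by (simp add: lookup_ev)
      qed
    qed
  qed
  moreover have "sum_list r \<in> St E t" unfolding St_def using r by blast
  ultimately show ?thesis by blast
qed

end

lemma lookup_shift: "Poly_Mapping.lookup (g * Poly_Mapping.single e (1::'k::field)) (m + e) = Poly_Mapping.lookup (g :: ('v,'k) mpoly) m"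
proof -
  have "g * Poly_Mapping.single e 1 = (\<Sum>k\<in>Poly_Mapping.keys g. Poly_Mapping.single k (Poly_Mapping.lookup g k)) * Poly_Mapping.single e 1"
    using poly_decomp[of g] by metis
  also have "\<dots> = (\<Sum>k\<in>Poly_Mapping.keys g. Poly_Mapping.single (k + e) (Poly_Mapping.lookup g k))"
    by (simp add: sum_distrib_right mult_single)
  finally have eq: "g * Poly_Mapping.single e 1 = (\<Sum>k\<in>Poly_Mapping.keys g. Poly_Mapping.single (k + e) (Poly_Mapping.lookup g k))" .
  show ?thesis unfolding eq lookup_sum lookup_single
    by (simp add: when_def in_keys_iff)
qed

lemma (in leafctx) colon:
  "((g :: ('v,'k::field) mpoly) * Poly_Mapping.single (ev a b) 1 \<in> MI (St E (Suc t))) \<longleftrightarrow> g \<in> MI (St E t)"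
proof
  assume H: "g * Poly_Mapping.single (ev a b) 1 \<in> MI (St E (Suc t))"
  show "g \<in> MI (St E t)" unfolding MI_def
  proof (safe)
    fix m assume m: "m \<in> Poly_Mapping.keys g"
    then have "m + ev a b \<in> Poly_Mapping.keys (g * Poly_Mapping.single (ev a b) 1)"
      by (simp add: in_keys_iff lookup_shift)
    then obtain s where s: "s \<in> St E (Suc t)" "mle s (m + ev a b)" using H unfolding MI_def by blast
    then obtain ds where "s = sum_list ds" "length ds = Suc t" "set ds \<subseteq> S1 E" unfolding St_def by blast
    then show "\<exists>s\<in>St E t. mle s m" using comb s(2) by blast
  qed
next
  assume H: "g \<in> MI (St E t)"
  show "g * Poly_Mapping.single (ev a b) 1 \<in> MI (St E (Suc t))" unfolding MI_def
  proof (safe)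
    fix m assume "m \<in> Poly_Mapping.keys (g * Poly_Mapping.single (ev a b) 1)"
    then obtain x where x: "m = x + ev a b" "x \<in> Poly_Mapping.keys g"
      using keys_mult[of g "Poly_Mapping.single (ev a b) 1"] by auto
    obtain s where s: "s \<in> St E t" "mle s x" using H x(2) unfolding MI_def by blast
    then obtain ds where ds: "s = sum_list ds" "length ds = t" "set ds \<subseteq> S1 E" unfolding St_def by blast
    have "ev a b + s \<in> St E (Suc t)" unfolding St_def using ds e_in by (auto intro!: exI[of _ "ev a b # ds"])
    moreover have "mle (ev a b + s) m" using s(2) x(1) by (simp add: mle_def lookup_add)
    ultimately show "\<exists>s\<in>St E (Suc t). mle s m" by blast
  qed
qed

theorem proposition4p20:
  fixes E :: "('v::finite) set set"
  assumes "simple_graph E" and "has_leaf E" and "t \<ge> 1"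
  shows "Ass_quot (ideal_pow (edge_ideal E :: ('v, 'k::field) mpoly set) t)
           \<subseteq> Ass_quot (ideal_pow (edge_ideal E :: ('v, 'k) mpoly set) (t + 1))"
proof -
  obtain a where "degree E a = 1" using assms(2) unfolding has_leaf_def by blast
  then obtain b where B: "{u. {u, a} \<in> E} = {b}" unfolding degree_def using card_1_singletonE by blast
  interpret leafctx E a b
    by unfold_locales (use assms(1) B in auto)
  show ?thesis
  proof
    fix P assume "P \<in> Ass_quot (ideal_pow (edge_ideal E :: ('v, 'k::field) mpoly set) t)"
    then obtain f where P: "is_prime_ideal P" "P = {g. g * f \<in> (MI (St E t) :: ('v,'k) mpoly set)}"
      unfolding Ass_quot_def edge_MI pow_MI by blast
    have "P = {g. g * (f * Poly_Mapping.single (ev a b) 1) \<in> (MI (St E (Suc t)) :: ('v,'k) mpoly set)}"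
      unfolding P(2) mult.assoc[symmetric] colon by simp
    then show "P \<in> Ass_quot (ideal_pow (edge_ideal E :: ('v, 'k::field) mpoly set) (t + 1))"
      unfolding Ass_quot_def edge_MI pow_MI using P(1) by auto
  qed
qed

end
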